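(* Let $U\in\mathcal{U}_N$ be $\varepsilon$-far from every quantum $k$-junta, and relabel the qubits so that $\mathrm{Inf}_1[U]\ge\mathrm{Inf}_2[U]\ge\cdots\ge\mathrm{Inf}_n[U]$ (with $\mathrm{Inf}_j[U]:=0$ for $j>n$). Then either $\sum_{j=k+1}^{200k}\mathrm{Inf}_j[U]\le\varepsilon^2/8$, or there exists $l\in\{0,1,\dots,\lfloor\log(200k)\rfloor\}$ such that $$\left|\left\{j\in[n]:\mathrm{Inf}_j[U]\ge\frac{\varepsilon^2}{2^{l+5}\log(400k)}\right\}\right|\ge k+2^l.$$
   Context: $N=2^n$, $\mathcal{U}_N$ is the set of $N\times N$ unitaries; logarithms are base 2. For $x\in\mathbb{Z}_4^n$, $\sigma_x=\sigma_{x_1}\otimes\cdots\otimes\sigma_{x_n}$ with Pauli matrices $\sigma_0=I,\sigma_1=X,\sigma_2=Y,\sigma_3=Z$. Writing $U=\sum_x\widehat{U}(x)\sigma_x$, the influence of qubit $j$ is $\mathrm{Inf}_j[U]=\sum_{x:\,x_j\ne0}|\widehat{U}(x)|^2$. A unitary is a quantum $k$-junta if it equals $V_S\otimes I_{\overline{S}}$ for some $S\subseteq[n]$, $|S|=k$, $V_S\in\mathcal{U}_{2^k}$; $U$ is $\varepsilon$-far from every quantum $k$-junta if $\min_{\theta}\frac{1}{\sqrt{2N}}\|e^{i\theta}U-V\|\ge\varepsilon$ (Frobenius norm) for all quantum $k$-juntas $V$. *)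

theory Defs
  imports "HOL-Analysis.Analysis"
begin

text \<open>Matrices of size d x d are functions nat => nat => complex, with
  indices in {0..<d}.  Entries outside the range are ignored.  For n qubits,
  N = 2^n; qubit j (0 \<le> j < n) of a basis index a < N is the bit (a div 2^j) mod 2.\<close>

type_synonym cmat = "nat \<Rightarrow> nat \<Rightarrow> complex"

definition unitary_mat :: "nat \<Rightarrow> cmat \<Rightarrow> bool" where
  "unitary_mat d U \<longleftrightarrow>
     (\<forall>a<d. \<forall>b<d. (\<Sum>c<d. U a c * cnj (U b c)) = (if a = b then 1 else 0)) \<and>
     (\<forall>a<d. \<forall>b<d. (\<Sum>c<d. cnj (U c a) * U c b) = (if a = b then 1 else 0))"

definition bit_of :: "nat \<Rightarrow> nat \<Rightarrow> nat" where
  "bit_of a j = (a div 2 ^ j) mod 2"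

definition pauli1 :: "nat \<Rightarrow> nat \<Rightarrow> nat \<Rightarrow> complex" where
  "pauli1 s r c =
     (if s = 0 then (if r = c then 1 else 0)
      else if s = 1 then (if r \<noteq> c then 1 else 0)
      else if s = 2 then (if r = 0 \<and> c = 1 then - \<i> else if r = 1 \<and> c = 0 then \<i> else 0)
      else (if r = c then (if r = 0 then 1 else -1) else 0))"

text \<open>Pauli strings x in Z_4^n, represented by functions with x j < 4 for j < n
  and x j = 0 for j \<ge> n.\<close>
definition pauli_strings :: "nat \<Rightarrow> (nat \<Rightarrow> nat) set" where
  "pauli_strings n = {x. (\<forall>j<n. x j < 4) \<and> (\<forall>j\<ge>n. x j = 0)}"

definition pauli_string :: "nat \<Rightarrow> (nat \<Rightarrow> nat) \<Rightarrow> cmat" where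
  "pauli_string n x = (\<lambda>a b. \<Prod>j<n. pauli1 (x j) (bit_of a j) (bit_of b j))"

text \<open>Pauli (Fourier) coefficient: the coefficient of sigma_x in the expansion
  U = sum_x Uhat(x) sigma_x, i.e. Uhat(x) = tr(sigma_x^dagger U) / N.\<close>
definition pauli_coeff :: "nat \<Rightarrow> cmat \<Rightarrow> (nat \<Rightarrow> nat) \<Rightarrow> complex" where
  "pauli_coeff n U x =
     (\<Sum>a<2^n. \<Sum>b<2^n. cnj (pauli_string n x b a) * U b a) / of_nat (2 ^ n)"

definition influence :: "nat \<Rightarrow> cmat \<Rightarrow> nat \<Rightarrow> real" where
  "influence n U j = (\<Sum>x\<in>{x\<in>pauli_strings n. x j \<noteq> 0}. (cmod (pauli_coeff n U x))\<^sup>2)"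

text \<open>Index of the restriction of basis index a to the qubits in S
  (enumerated in increasing order).\<close>
definition restrict_idx :: "nat set \<Rightarrow> nat \<Rightarrow> nat" where
  "restrict_idx S a = (\<Sum>i<card S. bit_of a (sorted_list_of_set S ! i) * 2 ^ i)"

text \<open>V_S \<otimes> I_{complement of S}\<close>
definition tensor_on :: "nat \<Rightarrow> nat set \<Rightarrow> cmat \<Rightarrow> cmat" where
  "tensor_on n S V = (\<lambda>a b. if (\<forall>j\<in>{0..<n} - S. bit_of a j = bit_of b j)
                             then V (restrict_idx S a) (restrict_idx S b) else 0)"

definition quantum_junta :: "nat \<Rightarrow> nat \<Rightarrow> cmat \<Rightarrow> bool" where
  "quantum_junta n k W \<longleftrightarrow>
     (\<exists>S V. S \<subseteq> {0..<n} \<and> card S = k \<and> unitary_mat (2 ^ k) V \<and>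
            (\<forall>a<2^n. \<forall>b<2^n. W a b = tensor_on n S V a b))"

definition frob_norm :: "nat \<Rightarrow> cmat \<Rightarrow> real" where
  "frob_norm d A = sqrt (\<Sum>a<d. \<Sum>b<d. (cmod (A a b))\<^sup>2)"

definition far_from_juntas :: "nat \<Rightarrow> nat \<Rightarrow> real \<Rightarrow> cmat \<Rightarrow> bool" where
  "far_from_juntas n k \<epsilon> U \<longleftrightarrow>
     (\<forall>W. quantum_junta n k W \<longrightarrow>
        (\<forall>\<theta>::real. frob_norm (2^n) (\<lambda>a b. exp (\<i> * of_real \<theta>) * U a b - W a b)
                     / sqrt (2 * 2 ^ n) \<ge> \<epsilon>))"

end

theory Submission
  imports Defs
begin

lemma harm_le_ln: "n \<ge> 1 \<Longrightarrow> (harm n :: real) \<le> 1 + ln (real n)"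
proof (induction n rule: dec_induct)
  case base
  then show ?case by (simp add: harm_def)
next
  case (step m)
  have m1: "real m \<ge> 1" using step by simp
  have "ln (real m / real (Suc m)) \<le> real m / real (Suc m) - 1"
    by (rule ln_le_minus_one) (use m1 in simp)
  also have "\<dots> = - inverse (real (Suc m))" using m1 by (simp add: field_simps)
  finally have "inverse (real (Suc m)) \<le> ln (real (Suc m)) - ln (real m)"
    using m1 by (simp add: ln_div)
  then show ?case using step.IH by (simp add: harm_Suc)
qed

theorem mainTheorem9:
  fixes n k :: nat and \<epsilon> :: real and U :: cmat and \<pi> :: "nat \<Rightarrow> nat"
  assumes "0 < \<epsilon>"
    and "unitary_mat (2 ^ n) U"
    and "far_from_juntas n k \<epsilon> U"
    and "bij_betw \<pi> {1..n} {0..<n}"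
    and "\<And>i j. 1 \<le> i \<Longrightarrow> i \<le> j \<Longrightarrow> j \<le> n \<Longrightarrow> influence n U (\<pi> i) \<ge> influence n U (\<pi> j)"
  defines "InfS \<equiv> (\<lambda>j. if 1 \<le> j \<and> j \<le> n then influence n U (\<pi> j) else 0)"
  shows "(\<Sum>j=k+1..200*k. InfS j) \<le> \<epsilon>\<^sup>2 / 8 \<or>
         (\<exists>l::nat. l \<le> nat \<lfloor>log 2 (200 * real k)\<rfloor> \<and>
            card {j\<in>{1..n}. InfS j \<ge> \<epsilon>\<^sup>2 / (2 ^ (l + 5) * log 2 (400 * real k))} \<ge> k + 2 ^ l)"
proof (cases "k = 0")
  case True
  then show ?thesis using assms(1) by simp
next
  case False
  hence k1: "real k \<ge> 1" by simp
  show ?thesis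
  proof (rule disjCI)
    assume neg: "\<not> (\<exists>l::nat. l \<le> nat \<lfloor>log 2 (200 * real k)\<rfloor> \<and>
            card {j\<in>{1..n}. InfS j \<ge> \<epsilon>\<^sup>2 / (2 ^ (l + 5) * log 2 (400 * real k))} \<ge> k + 2 ^ l)"
    define Lg where "Lg = log 2 (400 * real k)"
    define L where "L = nat \<lfloor>log 2 (200 * real k)\<rfloor>"
    have lnle: "ln (200 * real k) \<le> log 2 (200 * real k)"
    proof -
      have "ln (200 * real k) \<ge> 0" using k1 by simp
      moreover have "ln (2::real) \<le> 1" using ln_le_minus_one[of 2] by simp
      moreover have "ln (2::real) > 0" by simp
      ultimately show ?thesis unfolding log_def
        by (simp add: le_divide_eq mult_left_le)
    qed
    have Lg_eq: "Lg = 1 + log 2 (200 * real k)"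
      proof -
      have "log 2 (400 * real k) = log 2 (2 * (200 * real k))" by simp
      also have "\<dots> = log 2 2 + log 2 (200 * real k)"
        using k1 by (intro log_mult_pos) auto
      finally show ?thesis unfolding Lg_def by simp
    qed
    have ln199: "ln (real (199 * k)) \<le> ln (200 * real k)" using k1 by simp
    have LgB: "1 + ln (real (199 * k)) \<le> Lg" using Lg_eq lnle ln199 by linarith
    have Lgpos: "Lg > 0" using LgB k1 ln199 lnle Lg_eq
      by (smt (verit) ln_ge_zero of_nat_1 of_nat_le_iff)
    have mono: "InfS j \<le> InfS i" if "1 \<le> i" "i \<le> j" "j \<le> n" for i j
      using assms(5)[OF that] that unfolding InfS_def by simp
    have A: "InfS j < \<epsilon>\<^sup>2 / (2 ^ (l + 5) * Lg)" if "l \<le> L" "k + 2 ^ l \<le> j" for l j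
    proof (rule ccontr)
      assume "\<not> ?thesis"
      hence ge: "InfS j \<ge> \<epsilon>\<^sup>2 / (2 ^ (l + 5) * Lg)" by simp
      have tpos: "\<epsilon>\<^sup>2 / (2 ^ (l + 5) * Lg) > 0" using assms(1) Lgpos by simp
      have jn: "1 \<le> j \<and> j \<le> n"
      proof (rule ccontr)
        assume "\<not> ?thesis"
        hence "InfS j = 0" unfolding InfS_def by auto
        thus False using ge tpos by simp
      qed
      have "{1..j} \<subseteq> {j\<in>{1..n}. InfS j \<ge> \<epsilon>\<^sup>2 / (2 ^ (l + 5) * Lg)}"
      proof
        fix i assume "i \<in> {1..j}"
        thus "i \<in> {j\<in>{1..n}. InfS j \<ge> \<epsilon>\<^sup>2 / (2 ^ (l + 5) * Lg)}"
          using mono[of i j] jn ge by auto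
      qed
      hence "card {1..j} \<le> card {j\<in>{1..n}. InfS j \<ge> \<epsilon>\<^sup>2 / (2 ^ (l + 5) * Lg)}"
        by (intro card_mono) auto
      hence "k + 2 ^ l \<le> card {j\<in>{1..n}. InfS j \<ge> \<epsilon>\<^sup>2 / (2 ^ (l + 5) * Lg)}"
        using that(2) by simp
      thus False using neg that(1) unfolding L_def Lg_def by blast
    qed
    have B: "InfS (m + k) \<le> \<epsilon>\<^sup>2 / (16 * Lg) * inverse (real m)"
      if m: "1 \<le> m" "m \<le> 199 * k" for m
    proof -
      define l where "l = nat \<lfloor>log 2 (real m)\<rfloor>"
      have fl: "\<lfloor>log 2 (real m)\<rfloor> = int l"
        unfolding l_def using m by simp
      have bnds: "2 ^ l \<le> m \<and> m < 2 ^ (l + 1)"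
        using floor_log_nat_eq_powr_iff[of 2 m l] fl m by simp
      have "log 2 (real m) \<le> log 2 (200 * real k)"
        using m by simp
      hence "l \<le> L" unfolding l_def L_def
        by (meson floor_mono nat_mono)
      hence lt: "InfS (m + k) < \<epsilon>\<^sup>2 / (2 ^ (l + 5) * Lg)"
        using A bnds by simp
      have "real m < 2 * 2 ^ l" using bnds
        by (metis of_nat_less_iff of_nat_numeral of_nat_power power_Suc Suc_eq_plus1 of_nat_mult)
      hence "16 * Lg * real m \<le> 2 ^ (l + 5) * Lg"
        using Lgpos by (simp add: power_add)
      hence "\<epsilon>\<^sup>2 / (2 ^ (l + 5) * Lg) \<le> \<epsilon>\<^sup>2 / (16 * Lg * real m)"
        using m Lgpos by (intro divide_left_mono) auto
      thus ?thesis using lt by (simp add: field_simps)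
    qed
    have "(\<Sum>j=k+1..200*k. InfS j) = (\<Sum>m=1..199*k. InfS (m + k))"
      using sum.shift_bounds_cl_nat_ivl[of InfS 1 k "199 * k"] by (simp add: add.commute)
    also have "\<dots> \<le> (\<Sum>m=1..199*k. \<epsilon>\<^sup>2 / (16 * Lg) * inverse (real m))"
      by (intro sum_mono B) auto
    also have "\<dots> = \<epsilon>\<^sup>2 / (16 * Lg) * harm (199 * k)"
      by (simp add: harm_def sum_distrib_left)
    also have "\<dots> \<le> \<epsilon>\<^sup>2 / (16 * Lg) * Lg"
      using harm_le_ln[of "199 * k"] LgB k1 Lgpos
      by (intro mult_left_mono) auto
    also have "\<dots> \<le> \<epsilon>\<^sup>2 / 8" using Lgpos by simp
    finally show "(\<Sum>j=k+1..200*k. InfS j) \<le> \<epsilon>\<^sup>2 / 8" .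
  qed
qed

end
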